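(* Let $A\subset\mathbb{N}\setminus\{1\}$ and let $M\subset\ell^\infty$ be a $2$-dimensional linear subspace such that $|L_z|\in A$ for every $z\in M\setminus\{0\}$. Put $$n_1=\min\{|L_z|: z\in M\setminus\{0\}\},\qquad n_2=\max\{|L_z|: z\in M\}.$$ Then $n_1,n_2\in A$ and the open interval $(n_2-n_1,n_2)$ contains an element of $A$.
   Context: $\ell^\infty$ is the space of bounded real sequences with the sup norm. For $x\in\ell^\infty$, $L_x$ denotes the set of accumulation points (subsequential limits) of $x$, and $|L_x|$ its cardinality. *)

theory Defs
  imports "HOL-Analysis.Analysis"
begin

text \<open>The space of bounded real sequences with the sup norm is modelled as the
  library type of bounded continuous functions \<open>nat \<Rightarrow>\<^sub>C real\<close>
  (every function on the discrete space \<open>nat\<close> is continuous).\<close>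

definition acc_points :: "(nat \<Rightarrow>\<^sub>C real) \<Rightarrow> real set" where
  "acc_points x = {l. \<exists>r::nat \<Rightarrow> nat. strict_mono r \<and> ((\<lambda>n. apply_bcontfun x (r n)) \<longlonglongrightarrow> l)}"

end

theory Submission
  imports Defs
begin

lemma chain_card:
  fixes S :: "(real \<times> real) set"
  assumes "finite S"
  shows "S \<noteq> {} \<longrightarrow> (\<forall>p\<in>S. \<forall>q\<in>S. (fst p \<le> fst q \<and> snd p \<le> snd q) \<or> (fst q \<le> fst p \<and> snd q \<le> snd p))
     \<longrightarrow> card S + 1 \<le> card (fst ` S) + card (snd ` S)"
  using assms
proof (induction S rule: finite_remove_induct)
  case empty
  then show ?case by simp
next
  case (remove A)
  show ?case
  proof (intro impI)
    assume ch: "\<forall>p\<in>A. \<forall>q\<in>A. (fst p \<le> fst q \<and> snd p \<le> snd q) \<or> (fst q \<le> fst p \<and> snd q \<le> snd p)"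
    obtain m where m: "m \<in> A" "\<forall>e\<in>A. fst e + snd e \<le> fst m + snd m"
    proof -
      let ?f = "\<lambda>e::real\<times>real. fst e + snd e"
      have "Max (?f ` A) \<in> ?f ` A" using remove.hyps(1,2) by (intro Max_in) auto
      then obtain m where "m \<in> A" "?f m = Max (?f ` A)" by auto
      moreover have "\<forall>e\<in>A. ?f e \<le> Max (?f ` A)" using remove.hyps(1) by auto
      ultimately show ?thesis using that by auto
    qed
    show "card A + 1 \<le> card (fst ` A) + card (snd ` A)"
    proof (cases "A - {m} = {}")
      case True
      then have "A = {m}" using m by auto
      then show ?thesis by simp
    next
      case False
      let ?A = "A - {m}"
      have IH: "card ?A + 1 \<le> card (fst ` ?A) + card (snd ` ?A)"
        using remove.IH[OF m(1)] False ch by auto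
      have le: "\<forall>e\<in>?A. fst e \<le> fst m \<and> snd e \<le> snd m"
      proof
        fix e assume e: "e \<in> ?A"
        have "e \<noteq> m" using e by auto
        have "\<not> (fst m \<le> fst e \<and> snd m \<le> snd e)"
        proof
          assume a: "fst m \<le> fst e \<and> snd m \<le> snd e"
          have "fst e + snd e \<le> fst m + snd m" using m(2) e by auto
          then have "fst e = fst m" "snd e = snd m" using a by linarith+
          then have "e = m" by (simp add: prod_eq_iff)
          then show False using \<open>e \<noteq> m\<close> by simp
        qed
        then show "fst e \<le> fst m \<and> snd e \<le> snd m" using ch m(1) e by blast
      qed
      have new: "fst m \<notin> fst ` ?A \<or> snd m \<notin> snd ` ?A"
      proof (rule ccontr)
        assume "\<not> ?thesis"
        then obtain e1 e2 where e: "e1 \<in> ?A" "e2 \<in> ?A" "fst e1 = fst m" "snd e2 = snd m" by force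
        have "(fst e1 \<le> fst e2 \<and> snd e1 \<le> snd e2) \<or> (fst e2 \<le> fst e1 \<and> snd e2 \<le> snd e1)"
          using ch e by blast
        then show False
        proof
          assume "fst e1 \<le> fst e2 \<and> snd e1 \<le> snd e2"
          then have "fst e2 = fst m" "snd e2 = snd m" using le e by force+
          then have "e2 = m" by (simp add: prod_eq_iff)
          then show False using e by auto
        next
          assume "fst e2 \<le> fst e1 \<and> snd e2 \<le> snd e1"
          then have "fst e1 = fst m" "snd e1 = snd m" using le e by force+
          then have "e1 = m" by (simp add: prod_eq_iff)
          then show False using e by auto
        qed
      qed
      have fA: "fst ` A = insert (fst m) (fst ` ?A)" and sA: "snd ` A = insert (snd m) (snd ` ?A)"
        using m(1) by auto
      have cA: "card A = card ?A + 1" using m(1) remove.hyps(1)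
        using card.remove by fastforce
      have fin: "finite (fst ` ?A)" "finite (snd ` ?A)" using remove.hyps(1) by auto
      have "card (fst ` A) \<ge> card (fst ` ?A)" "card (snd ` A) \<ge> card (snd ` ?A)"
        unfolding fA sA using fin by (auto intro: card_mono)
      moreover have "card (fst ` A) = card (fst ` ?A) + 1 \<or> card (snd ` A) = card (snd ` ?A) + 1"
        using new fin unfolding fA sA by auto
      ultimately show ?thesis using IH cA by linarith
    qed
  qed
qed

lemma comb:
  fixes K :: "'p set" and X Y :: "'p \<Rightarrow> real"
  assumes fin: "finite K" and inj: "inj_on (\<lambda>P. (X P, Y P)) K" and two: "card (X ` K) \<ge> 2"
  shows "\<exists>s. card K < card ((\<lambda>P. Y P - s * X P) ` K) + card (X ` K) \<and>
             card ((\<lambda>P. Y P - s * X P) ` K) < card K"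
proof -
  obtain P1 Q1 where PQ1: "P1 \<in> K" "Q1 \<in> K" "X P1 \<noteq> X Q1"
  proof -
    obtain a b where "a \<in> X ` K" "b \<in> X ` K" "a \<noteq> b"
    proof -
      have "\<not> card (X ` K) \<le> Suc 0" using two by simp
      then show ?thesis using card_le_Suc0_iff_eq[of "X ` K"] fin that by auto
    qed
    then show ?thesis using that by auto
  qed
  define T where "T = {(Y Q - Y P) / (X Q - X P) | P Q. P \<in> K \<and> Q \<in> K \<and> X P < X Q}"
  have Tfin: "finite T"
  proof -
    have "T = (\<lambda>(P,Q). (Y Q - Y P) / (X Q - X P)) ` {(P,Q). P \<in> K \<and> Q \<in> K \<and> X P < X Q}"
      unfolding T_def by auto
    moreover have "finite {(P,Q). P \<in> K \<and> Q \<in> K \<and> X P < X Q}"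
      by (rule finite_subset[of _ "K \<times> K"]) (use fin in auto)
    ultimately show ?thesis by simp
  qed
  have Tne: "T \<noteq> {}"
  proof (cases "X P1 < X Q1")
    case True then show ?thesis using PQ1 unfolding T_def by blast
  next
    case False then have "X Q1 < X P1" using PQ1 by auto
    then show ?thesis using PQ1 unfolding T_def by blast
  qed
  define s where "s = Max T"
  have sge: "Y Q - s * X Q \<le> Y P - s * X P" if "P \<in> K" "Q \<in> K" "X P < X Q" for P Q
  proof -
    have "(Y Q - Y P) / (X Q - X P) \<le> s" unfolding s_def using Tfin that unfolding T_def
      by (intro Max_ge) auto
    then have "Y Q - Y P \<le> s * (X Q - X P)" using that by (simp add: divide_le_eq)
    then show ?thesis by (simp add: algebra_simps)
  qed
  obtain P0 Q0 where PQ0: "P0 \<in> K" "Q0 \<in> K" "X P0 < X Q0" "s = (Y Q0 - Y P0) / (X Q0 - X P0)"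
    using Max_in[OF Tfin Tne] unfolding s_def[symmetric] unfolding T_def by blast
  define v where "v = (\<lambda>P. Y P - s * X P)"
  have "v P0 = v Q0" unfolding v_def using PQ0 by (simp add: field_simps)
  moreover have "P0 \<noteq> Q0" using PQ0 by auto
  ultimately have "\<not> inj_on v K" using PQ0 unfolding inj_on_def by blast
  then have upper: "card (v ` K) < card K"
    using inj_on_iff_eq_card[OF fin, of v] card_image_le[OF fin, of v] by linarith
  define S where "S = (\<lambda>P. (- v P, X P)) ` K"
  have injS: "inj_on (\<lambda>P. (- v P, X P)) K"
  proof (rule inj_onI)
    fix P Q assume "P \<in> K" "Q \<in> K" "(- v P, X P) = (- v Q, X Q)"
    then have "X P = X Q" "Y P = Y Q" unfolding v_def by auto
    then show "P = Q" using inj \<open>P \<in> K\<close> \<open>Q \<in> K\<close> unfolding inj_on_def by auto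
  qed
  have cS: "card S = card K" unfolding S_def using card_image[OF injS] .
  have fS: "fst ` S = uminus ` (v ` K)" and sS: "snd ` S = X ` K" unfolding S_def by (auto simp: image_image)
  have cf: "card (fst ` S) = card (v ` K)" unfolding fS by (rule card_image) (simp add: inj_on_def)
  have chain: "\<forall>p\<in>S. \<forall>q\<in>S. (fst p \<le> fst q \<and> snd p \<le> snd q) \<or> (fst q \<le> fst p \<and> snd q \<le> snd p)"
  proof (intro ballI)
    fix p q assume "p \<in> S" "q \<in> S"
    then obtain P Q where PQ: "P \<in> K" "Q \<in> K" "p = (- v P, X P)" "q = (- v Q, X Q)" unfolding S_def by auto
    consider "X P < X Q" | "X Q < X P" | "X P = X Q" by linarith
    then show "(fst p \<le> fst q \<and> snd p \<le> snd q) \<or> (fst q \<le> fst p \<and> snd q \<le> snd p)"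
    proof cases
      case 1 then have "v Q \<le> v P" using sge PQ unfolding v_def by auto
      then show ?thesis using 1 PQ by auto
    next
      case 2 then have "v P \<le> v Q" using sge PQ unfolding v_def by auto
      then show ?thesis using 2 PQ by auto
    next
      case 3 then show ?thesis using PQ by auto
    qed
  qed
  have "S \<noteq> {}" unfolding S_def using PQ1 by auto
  moreover have "finite S" unfolding S_def using fin by auto
  ultimately have "card S + 1 \<le> card (fst ` S) + card (snd ` S)" using chain_card chain by blast
  then have "card K < card (v ` K) + card (X ` K)" using cS cf sS by simp
  then show ?thesis using upper unfolding v_def by blast
qed

lemma acc_lin:
  fixes x y :: "nat \<Rightarrow>\<^sub>C real"
  defines "K \<equiv> {P. \<exists>r::nat\<Rightarrow>nat. strict_mono r \<and> ((\<lambda>n. apply_bcontfun x (r n)) \<longlonglongrightarrow> fst P)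
                     \<and> ((\<lambda>n. apply_bcontfun y (r n)) \<longlonglongrightarrow> snd P)}"
  shows "acc_points (a *\<^sub>R x + b *\<^sub>R y) = (\<lambda>P. a * fst P + b * snd P) ` K"
proof (intro equalityI subsetI)
  fix l assume "l \<in> acc_points (a *\<^sub>R x + b *\<^sub>R y)"
  then obtain r :: "nat\<Rightarrow>nat" where r: "strict_mono r"
    "(\<lambda>n. a * apply_bcontfun x (r n) + b * apply_bcontfun y (r n)) \<longlonglongrightarrow> l"
    unfolding acc_points_def by auto
  have "bounded (range (\<lambda>n. apply_bcontfun x (r n)))"
    by (rule bounded_subset[OF bounded_apply_bcontfun[of x]]) auto
  then obtain p r1 where r1: "strict_mono r1" "((\<lambda>n. apply_bcontfun x (r n)) \<circ> r1) \<longlonglongrightarrow> p"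
    using bounded_imp_convergent_subsequence by blast
  have "bounded (range (\<lambda>n. apply_bcontfun y (r (r1 n))))"
    by (rule bounded_subset[OF bounded_apply_bcontfun[of y]]) auto
  then obtain q r2 where r2: "strict_mono r2" "((\<lambda>n. apply_bcontfun y (r (r1 n))) \<circ> r2) \<longlonglongrightarrow> q"
    using bounded_imp_convergent_subsequence by blast
  define R where "R = r \<circ> r1 \<circ> r2"
  have R: "strict_mono R" unfolding R_def using r(1) r1(1) r2(1) by (intro strict_mono_o)
  have xR: "(\<lambda>n. apply_bcontfun x (R n)) \<longlonglongrightarrow> p"
    using LIMSEQ_subseq_LIMSEQ[OF r1(2) r2(1)] unfolding R_def by (simp add: o_def)
  have yR: "(\<lambda>n. apply_bcontfun y (R n)) \<longlonglongrightarrow> q"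
    using r2(2) unfolding R_def by (simp add: o_def)
  have "(\<lambda>n. a * apply_bcontfun x (R n) + b * apply_bcontfun y (R n)) \<longlonglongrightarrow> l"
    using LIMSEQ_subseq_LIMSEQ[OF r(2) strict_mono_o[OF r1(1) r2(1)]] unfolding R_def
    by (simp add: o_def)
  moreover have "(\<lambda>n. a * apply_bcontfun x (R n) + b * apply_bcontfun y (R n)) \<longlonglongrightarrow> a * p + b * q"
    by (intro tendsto_intros xR yR)
  ultimately have "l = a * p + b * q" by (rule LIMSEQ_unique)
  moreover have "(p, q) \<in> K" unfolding K_def using R xR yR by auto
  ultimately show "l \<in> (\<lambda>P. a * fst P + b * snd P) ` K" by force
next
  fix l assume "l \<in> (\<lambda>P. a * fst P + b * snd P) ` K"
  then obtain P r where "l = a * fst P + b * snd P" "strict_mono r"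
    "(\<lambda>n. apply_bcontfun x (r n)) \<longlonglongrightarrow> fst P" "(\<lambda>n. apply_bcontfun y (r n)) \<longlonglongrightarrow> snd P"
    unfolding K_def by auto
  then show "l \<in> acc_points (a *\<^sub>R x + b *\<^sub>R y)" unfolding acc_points_def
    by (auto intro!: exI[of _ r] tendsto_intros)
qed

theorem proposition2p2:
  fixes A :: "nat set" and M :: "(nat \<Rightarrow>\<^sub>C real) set"
  assumes "1 \<notin> A"
    and "subspace M" and "dim M = 2"
    and "\<forall>z\<in>M - {0}. finite (acc_points z) \<and> card (acc_points z) \<in> A"
  shows "\<exists>n1 n2.
           n1 \<in> {card (acc_points z) | z. z \<in> M - {0}} \<and>
           (\<forall>z\<in>M - {0}. n1 \<le> card (acc_points z)) \<and>
           n2 \<in> {card (acc_points z) | z. z \<in> M} \<and>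
           (\<forall>z\<in>M. card (acc_points z) \<le> n2) \<and>
           n1 \<in> A \<and> n2 \<in> A \<and>
           (\<exists>a\<in>A. n2 - n1 < a \<and> a < n2)"
proof -
  note A1 = assms(1) and sub = assms(2) and dimM = assms(3) and hyp = assms(4)
  obtain B where B: "B \<subseteq> M" "independent B" "M \<subseteq> span B" "card B = dim M"
    using basis_exists by blast
  obtain x y where xy: "B = {x, y}" "x \<noteq> y" using B(4) dimM card_2_iff by metis
  have xM: "x \<in> M" and yM: "y \<in> M" using B(1) xy by auto
  have "span {x, y} \<subseteq> M" using span_minimal[OF _ sub, of "{x,y}"] xM yM by auto
  then have MB: "M = span {x, y}" using B(3) xy by auto
  have indep: "independent {x, y}" using B(2) xy by simp
  have y0: "y \<noteq> 0" using indep dependent_zero by blast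
  have xns: "x \<notin> span {y}" using indep xy(2) by (simp add: independent_insert)
  have lin0: "a = 0 \<and> b = 0" if "a *\<^sub>R x + b *\<^sub>R y = 0" for a b
  proof (cases "a = 0")
    case True
    then have "b *\<^sub>R y = 0" using that by simp
    then show ?thesis using True y0 by simp
  next
    case False
    have "x = (- b / a) *\<^sub>R y"
    proof -
      have "a *\<^sub>R x = - (b *\<^sub>R y)" using that by (simp add: eq_neg_iff_add_eq_0)
      moreover have "x = (1/a) *\<^sub>R (a *\<^sub>R x)" using False by simp
      ultimately have "x = (1/a) *\<^sub>R (- (b *\<^sub>R y))" by simp
      then show ?thesis by (simp add: divide_inverse)
    qed
    moreover have "(- b / a) *\<^sub>R y \<in> span {y}" by (intro span_scale span_base) simp
    ultimately have "x \<in> span {y}" by simp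
    then show ?thesis using xns by simp
  qed
  have inM: "a *\<^sub>R x + b *\<^sub>R y \<in> M" for a b
    using sub xM yM by (intro subspace_add subspace_scale) auto
  have rep: "\<exists>a b. z = a *\<^sub>R x + b *\<^sub>R y" if "z \<in> M" for z
  proof -
    have "z \<in> span (insert x {y})" using that MB by simp
    then obtain k where "z - k *\<^sub>R x \<in> span {y}" unfolding span_insert by auto
    then obtain c where "z - k *\<^sub>R x = c *\<^sub>R y" unfolding span_singleton by auto
    then have "z = k *\<^sub>R x + c *\<^sub>R y" by (simp add: algebra_simps)
    then show ?thesis by blast
  qed
  define K where "K \<equiv> {P. \<exists>r::nat\<Rightarrow>nat. strict_mono r \<and> ((\<lambda>n. apply_bcontfun x (r n)) \<longlonglongrightarrow> fst P)
                     \<and> ((\<lambda>n. apply_bcontfun y (r n)) \<longlonglongrightarrow> snd P)}"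
  have acc: "acc_points (a *\<^sub>R x + b *\<^sub>R y) = (\<lambda>P. a * fst P + b * snd P) ` K" for a b
    unfolding K_def by (rule acc_lin)
  have nz: "a *\<^sub>R x + b *\<^sub>R y \<noteq> 0" if "a \<noteq> 0 \<or> b \<noteq> 0" for a b
    using lin0 that by blast
  have accx: "acc_points x = fst ` K" using acc[of 1 0] by simp
  have accy: "acc_points y = snd ` K" using acc[of 0 1] by simp
  have finx: "finite (acc_points x)" using hyp xM nz[of 1 0] by auto
  have finy: "finite (acc_points y)" using hyp yM nz[of 0 1] by auto
  have finK: "finite K"
    by (rule finite_subset[of _ "acc_points x \<times> acc_points y"])
       (use finx finy accx accy in force)+
  have Kne: "K \<noteq> {}"
  proof -
    obtain p r1 where r1: "strict_mono r1" "(apply_bcontfun x \<circ> r1) \<longlonglongrightarrow> p"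
      using bounded_imp_convergent_subsequence[OF bounded_apply_bcontfun[of x]] by blast
    have "bounded (range (\<lambda>n. apply_bcontfun y (r1 n)))"
      by (rule bounded_subset[OF bounded_apply_bcontfun[of y]]) auto
    then obtain q r2 where r2: "strict_mono r2" "((\<lambda>n. apply_bcontfun y (r1 n)) \<circ> r2) \<longlonglongrightarrow> q"
      using bounded_imp_convergent_subsequence by blast
    have "(p, q) \<in> K" unfolding K_def
      using strict_mono_o[OF r1(1) r2(1)] LIMSEQ_subseq_LIMSEQ[OF r1(2) r2(1)] r2(2)
      by (auto intro!: exI[of _ "r1 \<circ> r2"] simp: o_def)
    then show ?thesis by auto
  qed
  define N where "N = card K"
  have leN: "card (acc_points z) \<le> N" if "z \<in> M" for z
    using rep[OF that] acc card_image_le[OF finK] unfolding N_def by auto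
  obtain t :: real where t: "t \<notin> (\<lambda>(P,Q). (fst P - fst Q) / (snd Q - snd P)) ` (K \<times> K)"
    using ex_new_if_finite[OF infinite_UNIV_char_0, of "(\<lambda>(P,Q). (fst P - fst Q) / (snd Q - snd P)) ` (K \<times> K)"]
      finK by auto
  have injt: "inj_on (\<lambda>P. 1 * fst P + t * snd P) K"
  proof (rule inj_onI)
    fix P Q assume PQ: "P \<in> K" "Q \<in> K" "1 * fst P + t * snd P = 1 * fst Q + t * snd Q"
    show "P = Q"
    proof (cases "snd P = snd Q")
      case True then show ?thesis using PQ by (simp add: prod_eq_iff)
    next
      case False
      have "t = (fst P - fst Q) / (snd Q - snd P)" using PQ(3) False
        by (simp add: field_simps)
      then have "t \<in> (\<lambda>(P,Q). (fst P - fst Q) / (snd Q - snd P)) ` (K \<times> K)" using PQ by force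
      then show ?thesis using t by simp
    qed
  qed
  have NA: "N \<in> A" and NattM: "N = card (acc_points (1 *\<^sub>R x + t *\<^sub>R y))"
  proof -
    show "N = card (acc_points (1 *\<^sub>R x + t *\<^sub>R y))" unfolding acc N_def using card_image[OF injt] by simp
    moreover have "1 *\<^sub>R x + t *\<^sub>R y \<in> M - {0}" using inM[of 1 t] nz[of 1 t] by simp
    ultimately show "N \<in> A" using hyp by blast
  qed
  obtain z0 where z0: "z0 \<in> M - {0}" "\<forall>z. z \<in> M - {0} \<longrightarrow> card (acc_points z0) \<le> card (acc_points z)"
    using ex_has_least_nat[of "\<lambda>z. z \<in> M - {0}" x "\<lambda>z. card (acc_points z)"] xM nz[of 1 0] by auto
  define n1 where "n1 = card (acc_points z0)"
  obtain a0 b0 where ab0: "z0 = a0 *\<^sub>R x + b0 *\<^sub>R y" using rep z0(1) by blast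
  have ab0nz: "a0 \<noteq> 0 \<or> b0 \<noteq> 0" using z0(1) ab0 by auto
  have n1A: "n1 \<in> A" using hyp z0(1) unfolding n1_def by auto
  define X where "X = (\<lambda>P::real\<times>real. a0 * fst P + b0 * snd P)"
  define Y where "Y = (\<lambda>P::real\<times>real. - b0 * fst P + a0 * snd P)"
  have n1X: "n1 = card (X ` K)" unfolding n1_def ab0 acc X_def ..
  have n1ge: "n1 \<ge> 2"
  proof -
    have "n1 \<noteq> 0" unfolding n1X using finK Kne by simp
    moreover have "n1 \<noteq> 1" using n1A A1 by auto
    ultimately show ?thesis by linarith
  qed
  have injXY: "inj_on (\<lambda>P. (X P, Y P)) K"
  proof (rule inj_onI)
    fix P Q assume "P \<in> K" "Q \<in> K" "(X P, Y P) = (X Q, Y Q)"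
    then have e1: "a0 * (fst P - fst Q) + b0 * (snd P - snd Q) = 0"
      and e2: "- b0 * (fst P - fst Q) + a0 * (snd P - snd Q) = 0"
      unfolding X_def Y_def by (auto simp: algebra_simps)
    have pos: "a0\<^sup>2 + b0\<^sup>2 \<noteq> 0" using ab0nz by (simp add: add_nonneg_eq_0_iff)
    have "(a0\<^sup>2 + b0\<^sup>2) * (fst P - fst Q) = a0 * (a0 * (fst P - fst Q) + b0 * (snd P - snd Q)) - b0 * (- b0 * (fst P - fst Q) + a0 * (snd P - snd Q))"
      by (simp add: algebra_simps power2_eq_square)
    then have "(a0\<^sup>2 + b0\<^sup>2) * (fst P - fst Q) = 0" by (simp only: e1 e2 mult_zero_right diff_zero add_0)
    then have d1: "fst P = fst Q" using pos by (simp only: mult_eq_0_iff) simp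
    have "(a0\<^sup>2 + b0\<^sup>2) * (snd P - snd Q) = b0 * (a0 * (fst P - fst Q) + b0 * (snd P - snd Q)) + a0 * (- b0 * (fst P - fst Q) + a0 * (snd P - snd Q))"
      by (simp add: algebra_simps power2_eq_square)
    then have "(a0\<^sup>2 + b0\<^sup>2) * (snd P - snd Q) = 0" by (simp only: e1 e2 mult_zero_right diff_zero add_0)
    then have d2: "snd P = snd Q" using pos by (simp only: mult_eq_0_iff) simp
    show "P = Q" using d1 d2 by (simp add: prod_eq_iff)
  qed
  obtain s where s: "card K < card ((\<lambda>P. Y P - s * X P) ` K) + card (X ` K)"
    "card ((\<lambda>P. Y P - s * X P) ` K) < card K"
    using comb[OF finK injXY] n1ge n1X by auto
  define c where "c = - b0 - s * a0"
  define d where "d = a0 - s * b0"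
  have vfun: "(\<lambda>P. Y P - s * X P) = (\<lambda>P. c * fst P + d * snd P)"
    unfolding X_def Y_def c_def d_def by (auto simp: algebra_simps)
  have cd: "c \<noteq> 0 \<or> d \<noteq> 0"
  proof (rule ccontr)
    assume "\<not> ?thesis"
    then have "b0 = - s * a0" "a0 = s * b0" unfolding c_def d_def by auto
    then have h1: "b0 = - s * a0" and h2: "a0 = s * b0" by auto
    have E: "a0 = s * (- s * a0)" by (subst h1[symmetric]) (rule h2)
    have "a0 * (1 + s\<^sup>2) = a0 - s * (- s * a0)" by (simp add: algebra_simps power2_eq_square)
    also have "\<dots> = 0" using E by simp
    finally have "a0 * (1 + s\<^sup>2) = 0" .
    moreover have "1 + s\<^sup>2 \<noteq> 0" by (metis power2_less_0 add_eq_0_iff not_one_le_zero zero_le_power2 add_le_same_cancel2 le_add_same_cancel1)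
    ultimately have "a0 = 0" by simp
    then show False using ab0nz \<open>b0 = - s * a0\<close> by simp
  qed
  define w where "w = c *\<^sub>R x + d *\<^sub>R y"
  have "w \<in> M - {0}" using inM[of c d] nz[OF cd] unfolding w_def by simp
  then have wA: "card (acc_points w) \<in> A" using hyp by blast
  have cw: "card (acc_points w) = card ((\<lambda>P. Y P - s * X P) ` K)" unfolding w_def acc vfun ..
  show ?thesis
  proof (intro exI conjI)
    show "n1 \<in> {card (acc_points z) | z. z \<in> M - {0}}" unfolding n1_def using z0(1) by blast
    show "\<forall>z\<in>M - {0}. n1 \<le> card (acc_points z)" unfolding n1_def using z0(2) by blast
    show "N \<in> {card (acc_points z) | z. z \<in> M}" using NattM inM by blast
    show "\<forall>z\<in>M. card (acc_points z) \<le> N" using leN by blast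
    show "n1 \<in> A" by (rule n1A)
    show "N \<in> A" by (rule NA)
    show "\<exists>a\<in>A. N - n1 < a \<and> a < N"
    proof (rule bexI[of _ "card (acc_points w)"])
      show "card (acc_points w) \<in> A" by (rule wA)
      have h1: "card K < card (acc_points w) + n1" using s(1) cw n1X by simp
      have h2: "card (acc_points w) < card K" using s(2) cw by simp
      have h3: "0 < card (acc_points w)" using cw finK Kne by (simp add: card_gt_0_iff)
      have gen: "\<And>a b c::nat. a < b + c \<Longrightarrow> b < a \<Longrightarrow> 0 < b \<Longrightarrow> a - c < b \<and> b < a" by arith
      show "N - n1 < card (acc_points w) \<and> card (acc_points w) < N"
        unfolding N_def by (rule gen[OF h1 h2 h3])
    qed
  qed
qed

end
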